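(* For any system $\mathcal{G}$, if $\mathcal{G}\models\mathit{NDS}$ then $\mathcal{G}\models\mathit{GNI}$, where $\mathit{NDS}:=\neg\Big(\exists\pi_1.\langle\langle\{\xi_H\}\rangle\rangle\pi_2.\ \square\big(\bigwedge_{a\in L}a_{\pi_1}\leftrightarrow a_{\pi_2}\big)\rightarrow\lozenge\big(\bigvee_{a\in O}a_{\pi_1}\not\leftrightarrow a_{\pi_2}\big)\Big)$ and $\mathit{GNI}:=\forall\pi_1.\forall\pi_2.\exists\pi_3.\ \square\big(\bigwedge_{a\in H}a_{\pi_1}\leftrightarrow a_{\pi_3}\big)\wedge\square\big(\bigwedge_{a\in O}a_{\pi_2}\leftrightarrow a_{\pi_3}\big)$.
   Context: A multi-stage concurrent game structure (MSCGS) is $\mathcal{G}=(S,s_0,\Xi,\mathscr{M},\delta,d,\mathbf{AP},\ell)$: finite states $S$, initial state $s_0$, finite agents $\Xi$, finite moves $\mathscr{M}$, transition function $\delta:S\times(\Xi\to\mathscr{M})\to S$, stage function $d:\Xi\to\mathbb{N}$, atomic propositions $\mathbf{AP}$, labelling $\ell:S\to2^{\mathbf{AP}}$. A system here is an MSCGS with agents $\xi_N$ (non-determinism), $\xi_H$ (high-security inputs) and $\xi_L$ (low-security inputs), where $\mathbf{AP}$ contains pairwise disjoint sets $H$ (high inputs), $L$ (low inputs), $O$ (outputs), and the move of $\xi_H$ (resp. $\xi_L$) determines the values of the propositions in $H$ (resp. $L$) in the next state. In $\mathit{NDS}$ the implication is inside the scope of both quantifiers. Semantics of $\texttt{HyperATL}^*$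 used here: a strategy for agent $\xi$ is $f_\xi:S^+\times(\{\xi'\mid d(\xi')<d(\xi)\}\to\mathscr{M})\to\mathscr{M}$; for $A\subseteq\Xi$, strategies $F_A$ and state $s$, $\mathit{out}(\mathcal{G},s,F_A)$ is the set of $u\in S^\omega$ with $u(0)=s$ such that for all $i$ there is a global move vector $\sigma$ with $\delta(u(i),\sigma)=u(i+1)$ and $\sigma(\xi)=f_\xi(u[0,i],\sigma_{\mid\{\xi'\mid d(\xi')<d(\xi)\}})$ for all $\xi\in A$. For a path assignment $\Pi$, $\Pi\models\langle\langle A\rangle\rangle\pi.\varphi$ iff there exist $F_A$ such that for all $t\in\mathit{out}(\mathcal{G},\Pi(\epsilon)(0),F_A)$, $\Pi[\pi\mapsto t]\models\varphi$, where $\Pi(\epsilon)$ is the most recently added path ($\Pi(\epsilon)(0)=s_0$ if $\Pi$ is empty); $\forall\pi=\langle\langle\emptyset\rangle\rangle\pi$, $\exists\pi=\langle\langle\Xi\rangle\rangle\pi$; $a_\pi$ holds iff $a\in\ell$ of the current state of the path bound to $\pi$; temporal operators are interpreted synchronously; $\neg$ is negation. $\mathcal{G}\models\varphi$ iff the empty assignment satisfies $\varphi$. *)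

theory Defs
  imports Main
begin

text \<open>Multi-stage concurrent game structures. States, agents and moves are
  finite types (S, Xi, M are their universes); a global move vector is a total
  function from agents to moves.\<close>

record ('s, 'ag, 'm, 'ap) mscgs =
  init  :: "'s"
  trans :: "'s \<Rightarrow> ('ag \<Rightarrow> 'm) \<Rightarrow> 's"
  stage :: "'ag \<Rightarrow> nat"
  lab   :: "'s \<Rightarrow> 'ap set"

text \<open>A strategy maps a nonempty history (a list of states) and the moves of
  the agents of strictly lower stage (a partial move vector, undefined = None)
  to a move.\<close>
type_synonym ('s, 'ag, 'm) strategy = "'s list \<Rightarrow> ('ag \<Rightarrow> 'm option) \<Rightarrow> 'm"

definition lower_moves :: "('s,'ag,'m,'ap) mscgs \<Rightarrow> 'ag \<Rightarrow> ('ag \<Rightarrow> 'm) \<Rightarrow> ('ag \<Rightarrow> 'm option)" where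
  "lower_moves G x \<sigma> = (\<lambda>x'. if stage G x' < stage G x then Some (\<sigma> x') else None)"

definition out :: "('s::finite,'ag::finite,'m::finite,'ap) mscgs \<Rightarrow> 's \<Rightarrow> 'ag set
                   \<Rightarrow> ('ag \<Rightarrow> ('s,'ag,'m) strategy) \<Rightarrow> (nat \<Rightarrow> 's) set" where
  "out G s A F = {u. u 0 = s \<and>
     (\<forall>i. \<exists>\<sigma>. trans G (u i) \<sigma> = u (Suc i) \<and>
        (\<forall>x\<in>A. \<sigma> x = F x (map u [0..<Suc i]) (lower_moves G x \<sigma>)))}"

text \<open>Path assignments: list of paths, most recently added path first.\<close>
type_synonym 's passign = "(nat \<Rightarrow> 's) list"

definition recent_start :: "('s,'ag,'m,'ap) mscgs \<Rightarrow> 's passign \<Rightarrow> 's" where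
  "recent_start G \<Pi> = (case \<Pi> of [] \<Rightarrow> init G | t # _ \<Rightarrow> t 0)"

text \<open>Strategy quantifier  <<A>> pi. phi  (shallow embedding: phi is a predicate
  on path assignments).\<close>
definition strat_q :: "('s::finite,'ag::finite,'m::finite,'ap) mscgs \<Rightarrow> 'ag set
                       \<Rightarrow> ('s passign \<Rightarrow> bool) \<Rightarrow> 's passign \<Rightarrow> bool" where
  "strat_q G A \<phi> \<Pi> = (\<exists>F. \<forall>t\<in>out G (recent_start G \<Pi>) A F. \<phi> (t # \<Pi>))"

definition forall_q :: "('s::finite,'ag::finite,'m::finite,'ap) mscgs
                       \<Rightarrow> ('s passign \<Rightarrow> bool) \<Rightarrow> 's passign \<Rightarrow> bool" where
  "forall_q G \<phi> = strat_q G {} \<phi>"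

definition exists_q :: "('s::finite,'ag::finite,'m::finite,'ap) mscgs
                       \<Rightarrow> ('s passign \<Rightarrow> bool) \<Rightarrow> 's passign \<Rightarrow> bool" where
  "exists_q G \<phi> = strat_q G UNIV \<phi>"

definition is_system :: "('s::finite,'ag::finite,'m::finite,'ap) mscgs
   \<Rightarrow> 'ag \<Rightarrow> 'ag \<Rightarrow> 'ag \<Rightarrow> 'ap set \<Rightarrow> 'ap set \<Rightarrow> 'ap set \<Rightarrow> bool" where
  "is_system G xN xH xL H L Obs \<longleftrightarrow>
     distinct [xN, xH, xL] \<and> (UNIV :: 'ag set) = {xN, xH, xL} \<and>
     H \<inter> L = {} \<and> H \<inter> Obs = {} \<and> L \<inter> Obs = {} \<and>
     (\<exists>g. \<forall>s \<sigma>. lab G (trans G s \<sigma>) \<inter> H = g (\<sigma> xH)) \<and>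
     (\<exists>g. \<forall>s \<sigma>. lab G (trans G s \<sigma>) \<inter> L = g (\<sigma> xL))"

text \<open>G |= NDS  (pi_2 is the head of the assignment, pi_1 the second entry).\<close>
definition models_NDS :: "('s::finite,'ag::finite,'m::finite,'ap) mscgs
   \<Rightarrow> 'ag \<Rightarrow> 'ap set \<Rightarrow> 'ap set \<Rightarrow> bool" where
  "models_NDS G xH L Obs \<longleftrightarrow>
     \<not> exists_q G (strat_q G {xH} (\<lambda>\<Pi>.
         let t1 = \<Pi> ! 1; t2 = \<Pi> ! 0 in
         (\<forall>i. \<forall>a\<in>L. (a \<in> lab G (t1 i)) = (a \<in> lab G (t2 i))) \<longrightarrow>
         (\<exists>i. \<exists>a\<in>Obs. (a \<in> lab G (t1 i)) \<noteq> (a \<in> lab G (t2 i))))) []"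

text \<open>G |= GNI  (pi_3 head, pi_2 second, pi_1 third).\<close>
definition models_GNI :: "('s::finite,'ag::finite,'m::finite,'ap) mscgs
   \<Rightarrow> 'ap set \<Rightarrow> 'ap set \<Rightarrow> bool" where
  "models_GNI G H Obs \<longleftrightarrow>
     forall_q G (forall_q G (exists_q G (\<lambda>\<Pi>.
         let t1 = \<Pi> ! 2; t2 = \<Pi> ! 1; t3 = \<Pi> ! 0 in
         (\<forall>i. \<forall>a\<in>H. (a \<in> lab G (t1 i)) = (a \<in> lab G (t3 i))) \<and>
         (\<forall>i. \<forall>a\<in>Obs. (a \<in> lab G (t2 i)) = (a \<in> lab G (t3 i)))))) []"

end

theory Submission
  imports Defs
begin

lemma out_empty_iff: "u \<in> out G s {} F \<longleftrightarrow> u 0 = s \<and> (\<forall>i. \<exists>\<sigma>. trans G (u i) \<sigma> = u (Suc i))"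
  by (simp add: out_def)

lemma det_strat:
  fixes G :: "('s::finite, 'ag::finite, 'm::finite, 'ap) mscgs"
  assumes "\<forall>i. \<exists>\<sigma>. trans G (u i) \<sigma> = u (Suc i)"
  shows "\<exists>F. \<forall>t\<in>out G (u 0) UNIV F. t = u"
proof -
  define w where "w i = (SOME \<sigma>. trans G (u i) \<sigma> = u (Suc i))" for i
  have w: "trans G (u i) (w i) = u (Suc i)" for i
    unfolding w_def using assms by (metis (mono_tags, lifting) someI_ex)
  define F :: "'ag \<Rightarrow> ('s,'ag,'m) strategy" where "F = (\<lambda>x h _. w (length h - 1) x)"
  have "t = u" if t: "t \<in> out G (u 0) UNIV F" for t
  proof
    fix i show "t i = u i"
    proof (induction i)
      case 0 then show ?case using t by (simp add: out_def)
    next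
      case (Suc i)
      obtain \<sigma> where s: "trans G (t i) \<sigma> = t (Suc i)"
        "\<forall>x. \<sigma> x = F x (map t [0..<Suc i]) (lower_moves G x \<sigma>)"
        using t by (auto simp: out_def)
      have "\<sigma> = w i" using s(2) by (auto simp: F_def)
      then show ?case using s(1) Suc w by simp
    qed
  qed
  then show ?thesis by blast
qed

lemma not_strat: "\<not> strat_q G A \<phi> \<Pi> \<Longrightarrow> \<exists>t\<in>out G (recent_start G \<Pi>) A F. \<not> \<phi> (t # \<Pi>)"
  unfolding strat_q_def by blast

theorem lemma4p3:
  fixes G :: "('s::finite, 'ag::finite, 'm::finite, 'ap) mscgs"
  assumes "is_system G xN xH xL H L Obs"
    and "models_NDS G xH L Obs"
  shows "models_GNI G H Obs"
proof -
  obtain g where g: "\<And>s \<sigma>. lab G (trans G s \<sigma>) \<inter> H = g (\<sigma> xH)"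
    using assms(1) unfolding is_system_def by blast
  have NDS: "\<forall>F. \<exists>t\<in>out G (init G) UNIV F. \<not> strat_q G {xH} (\<lambda>\<Pi>.
         let t1 = \<Pi> ! 1; t2 = \<Pi> ! 0 in
         (\<forall>i. \<forall>a\<in>L. (a \<in> lab G (t1 i)) = (a \<in> lab G (t2 i))) \<longrightarrow>
         (\<exists>i. \<exists>a\<in>Obs. (a \<in> lab G (t1 i)) \<noteq> (a \<in> lab G (t2 i)))) [t]"
    using assms(2) unfolding models_NDS_def exists_q_def strat_q_def recent_start_def by auto
  have main: "\<exists>F. \<forall>t3\<in>out G (p2 0) UNIV F.
      (\<forall>i. \<forall>a\<in>H. (a \<in> lab G (p1 i)) = (a \<in> lab G (t3 i))) \<and>
      (\<forall>i. \<forall>a\<in>Obs. (a \<in> lab G (p2 i)) = (a \<in> lab G (t3 i)))"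
    if p1: "p1 0 = init G" "\<forall>i. \<exists>\<sigma>. trans G (p1 i) \<sigma> = p1 (Suc i)"
      and p2: "p2 0 = init G" "\<forall>i. \<exists>\<sigma>. trans G (p2 i) \<sigma> = p2 (Suc i)" for p1 p2
  proof -
    obtain F2 where F2: "\<forall>t\<in>out G (p2 0) UNIV F2. t = p2" using det_strat[OF p2(2)] by blast
    then have nq: "\<not> strat_q G {xH} (\<lambda>\<Pi>.
         let t1 = \<Pi> ! 1; t2 = \<Pi> ! 0 in
         (\<forall>i. \<forall>a\<in>L. (a \<in> lab G (t1 i)) = (a \<in> lab G (t2 i))) \<longrightarrow>
         (\<exists>i. \<exists>a\<in>Obs. (a \<in> lab G (t1 i)) \<noteq> (a \<in> lab G (t2 i)))) [p2]"
      using NDS p2(1) F2 by (metis (no_types, lifting))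
    define w where "w i = (SOME \<sigma>. trans G (p1 i) \<sigma> = p1 (Suc i))" for i
    have w: "trans G (p1 i) (w i) = p1 (Suc i)" for i
      unfolding w_def using p1(2) by (metis (mono_tags, lifting) someI_ex)
    define FH :: "'ag \<Rightarrow> ('s,'ag,'m) strategy" where "FH = (\<lambda>x h _. w (length h - 1) x)"
    obtain t where t: "t \<in> out G (p2 0) {xH} FH"
      and tl: "\<forall>i. \<forall>a\<in>L. (a \<in> lab G (p2 i)) = (a \<in> lab G (t i))"
      and tO: "\<forall>i. \<forall>a\<in>Obs. (a \<in> lab G (p2 i)) = (a \<in> lab G (t i))"
    proof -
      obtain t where t: "t \<in> out G (p2 0) {xH} FH" and nphi: "\<not> ((\<forall>i. \<forall>a\<in>L. (a \<in> lab G (p2 i)) = (a \<in> lab G (t i))) \<longrightarrow>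
         (\<exists>i. \<exists>a\<in>Obs. (a \<in> lab G (p2 i)) \<noteq> (a \<in> lab G (t i))))"
        using not_strat[OF nq, of FH] by (auto simp only: recent_start_def list.case Let_def nth_Cons_0 One_nat_def nth_Cons_Suc)
      show ?thesis using that[OF t] nphi by blast
    qed
    have tH: "\<forall>a\<in>H. (a \<in> lab G (p1 i)) = (a \<in> lab G (t i))" for i
    proof (cases i)
      case 0 then show ?thesis using t p1(1) p2(1) by (simp add: out_def)
    next
      case (Suc j)
      have "\<exists>\<sigma>. trans G (t j) \<sigma> = t (Suc j) \<and>
        \<sigma> xH = FH xH (map t [0..<Suc j]) (lower_moves G xH \<sigma>)"
        using t unfolding out_def mem_Collect_eq by blast
      then obtain \<sigma> where s: "trans G (t j) \<sigma> = t (Suc j)"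
        "\<sigma> xH = FH xH (map t [0..<Suc j]) (lower_moves G xH \<sigma>)"
        by blast
      have "\<sigma> xH = w j xH" using s(2) by (simp add: FH_def)
      then have "lab G (t (Suc j)) \<inter> H = lab G (p1 (Suc j)) \<inter> H"
        using g[of "t j" \<sigma>] g[of "p1 j" "w j"] s(1) w[of j] by simp
      then show ?thesis using Suc by blast
    qed
    have tp: "\<forall>i. \<exists>\<sigma>. trans G (t i) \<sigma> = t (Suc i)" using t by (auto simp: out_def)
    have t0: "t 0 = p2 0" using t by (simp add: out_def)
    obtain F3 where F3: "\<forall>t3\<in>out G (t 0) UNIV F3. t3 = t" using det_strat[OF tp] by blast
    show ?thesis
    proof (intro exI ballI)
      fix t3 assume "t3 \<in> out G (p2 0) UNIV F3"
      then have "t3 = t" using F3 t0 by simp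
      then show "(\<forall>i. \<forall>a\<in>H. (a \<in> lab G (p1 i)) = (a \<in> lab G (t3 i))) \<and>
      (\<forall>i. \<forall>a\<in>Obs. (a \<in> lab G (p2 i)) = (a \<in> lab G (t3 i)))" using tH tO by simp
    qed
  qed
  have key: "\<exists>F. \<forall>t3\<in>out G (p2 0) UNIV F.
      (\<forall>i. \<forall>a\<in>H. (a \<in> lab G (p1 i)) = (a \<in> lab G (t3 i))) \<and>
      (\<forall>i. \<forall>a\<in>Obs. (a \<in> lab G (p2 i)) = (a \<in> lab G (t3 i)))"
    if a1: "p1 \<in> out G (init G) {} F1" and a2: "p2 \<in> out G (p1 0) {} F2" for p1 p2 F1 F2
  proof -
    have p1: "p1 0 = init G" "\<forall>i. \<exists>\<sigma>. trans G (p1 i) \<sigma> = p1 (Suc i)"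
      using a1 by (auto simp: out_empty_iff)
    have p2: "p2 0 = init G" "\<forall>i. \<exists>\<sigma>. trans G (p2 i) \<sigma> = p2 (Suc i)"
      using a2 p1 by (auto simp: out_empty_iff)
    show ?thesis using main[OF p1 p2] .
  qed
  show ?thesis
    unfolding models_GNI_def forall_q_def exists_q_def strat_q_def recent_start_def
      list.case Let_def nth_Cons_0 One_nat_def numeral_2_eq_2 nth_Cons_Suc
    using key by blast
qed

end
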